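(* Let $K\supseteq\mathbb{F}_q$ be a field with Frobenius $\phi_q\colon a\mapsto a^q$, let $(M,\Phi)$ be an $n$-dimensional Frobenius module over $(K,\phi_q)$ with representing matrix $D\in\operatorname{GL}_n(K)$ with respect to some basis, and let $f\in K[X]$ be a polynomial of degree $q^n$. Suppose that every solution $x=(x_1,\ldots,x_n)\in\overline K^{\,n}$ of $D\cdot(x_1^q,\dots,x_n^q)^{\mathrm{tr}}=x$ is uniquely determined by its first coordinate $x_1$, that all other coordinates of $x$ lie in the field $K(x_1)$, and that $f(x_1)=0$. Then $\mathrm{Gal}^\Phi(M)\cong\mathrm{Gal}_K(f)$.
   Context: A Frobenius module over $(K,\phi_q)$ is a finite-dimensional $K$-vector space $M$ with an injective $\phi_q$-semilinear map $\Phi$; its representing matrix $D$ in a basis satisfies $\Phi(x)=D\cdot(x_1^q,\dots,x_n^q)^{\mathrm{tr}}$ in coordinates. The solution field is the minimal extension $L/K$ (inside the algebraic closure $\overline K$) such that $\{x\in L\otimes M:\Phi(x)=x\}$ has $\mathbb{F}_q$-dimension $\dim_K M$; it is Galois over $K$ and $\mathrm{Gal}^\Phi(M):=\mathrm{Gal}(L/K)$. *)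

theory Defs
  imports "HOL-Algebra.Algebraic_Closure_Type" "Jordan_Normal_Form.Matrix"
begin

text \<open>Ambient algebraic closure: for a field K of type 'k, the algebraic closure
  is the type 'k alg_closure, and K is embedded via to_ac.\<close>

definition is_subfield :: "'a::field set \<Rightarrow> bool" where
  "is_subfield L \<longleftrightarrow> 0 \<in> L \<and> 1 \<in> L \<and>
     (\<forall>a\<in>L. \<forall>b\<in>L. a + b \<in> L \<and> a * b \<in> L) \<and>
     (\<forall>a\<in>L. - a \<in> L \<and> inverse a \<in> L)"

definition gen_field :: "'a::field set \<Rightarrow> 'a set" where
  "gen_field S = \<Inter>{L. is_subfield L \<and> S \<subseteq> L}"

definition base_field :: "'k::field alg_closure set" where
  "base_field = range to_ac"

definition adjoin :: "'k::field alg_closure \<Rightarrow> 'k alg_closure set" where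
  "adjoin x = gen_field (base_field \<union> {x})"

definition ext_field :: "'k::field alg_closure set \<Rightarrow> bool" where
  "ext_field L \<longleftrightarrow> is_subfield L \<and> base_field \<subseteq> L"

definition Fq :: "nat \<Rightarrow> 'a::field set" where
  "Fq q = {a. a ^ q = a}"

definition frob_apply :: "nat \<Rightarrow> 'k::field mat \<Rightarrow> 'k alg_closure vec \<Rightarrow> 'k alg_closure vec" where
  "frob_apply q D x = map_mat to_ac D *\<^sub>v map_vec (\<lambda>a. a ^ q) x"

text \<open>Phi-fixed points of L \<otimes> M, in coordinates: vectors in L^n with Phi(x) = x.\<close>
definition frob_fixed :: "nat \<Rightarrow> 'k::field mat \<Rightarrow> 'k alg_closure set \<Rightarrow> 'k alg_closure vec set" where
  "frob_fixed q D L = {x. dim_vec x = dim_row D \<and> (\<forall>i < dim_vec x. x $ i \<in> L) \<and> frob_apply q D x = x}"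

definition has_Fq_dim :: "nat \<Rightarrow> 'a::field vec set \<Rightarrow> nat \<Rightarrow> bool" where
  "has_Fq_dim q S m \<longleftrightarrow>
     (\<exists>bs. length bs = m \<and> set bs \<subseteq> S \<and>
        (\<forall>x\<in>S. \<exists>!cs. length cs = m \<and> set cs \<subseteq> Fq q \<and>
             x = vec (dim_vec x) (\<lambda>j. \<Sum>i<m. cs ! i * (bs ! i) $ j)) \<and>
        (\<forall>cs. length cs = m \<and> set cs \<subseteq> Fq q \<longrightarrow>
             (\<exists>x\<in>S. x = vec (dim_vec x) (\<lambda>j. \<Sum>i<m. cs ! i * (bs ! i) $ j))))"

definition solution_field_good :: "nat \<Rightarrow> 'k::field mat \<Rightarrow> 'k alg_closure set \<Rightarrow> bool" where
  "solution_field_good q D L \<longleftrightarrow> ext_field L \<and> has_Fq_dim q (frob_fixed q D L) (dim_row D)"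

definition solution_field :: "nat \<Rightarrow> 'k::field mat \<Rightarrow> 'k alg_closure set" where
  "solution_field q D = (THE L. solution_field_good q D L \<and>
      (\<forall>L'. solution_field_good q D L' \<longrightarrow> L \<subseteq> L'))"

text \<open>Gal(L/K): automorphisms of L fixing K pointwise (extended by the identity
  outside L), as a group under composition.\<close>
definition gal_auts :: "'k::field alg_closure set \<Rightarrow> ('k alg_closure \<Rightarrow> 'k alg_closure) set" where
  "gal_auts L = {\<sigma>. bij_betw \<sigma> L L \<and>
      (\<forall>a\<in>L. \<forall>b\<in>L. \<sigma> (a + b) = \<sigma> a + \<sigma> b \<and> \<sigma> (a * b) = \<sigma> a * \<sigma> b) \<and>
      (\<forall>a\<in>base_field. \<sigma> a = a) \<and> (\<forall>x. x \<notin> L \<longrightarrow> \<sigma> x = x)}"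

definition gal_group :: "'k::field alg_closure set \<Rightarrow> ('k alg_closure \<Rightarrow> 'k alg_closure) monoid" where
  "gal_group L = \<lparr>carrier = gal_auts L, monoid.mult = (\<lambda>\<sigma> \<tau>. \<sigma> \<circ> \<tau>), one = id\<rparr>"

definition frob_gal_group :: "nat \<Rightarrow> 'k::field mat \<Rightarrow> ('k alg_closure \<Rightarrow> 'k alg_closure) monoid" where
  "frob_gal_group q D = gal_group (solution_field q D)"

definition splitting_field :: "'k::field poly \<Rightarrow> 'k alg_closure set" where
  "splitting_field f = gen_field (base_field \<union> {x. poly (map_poly to_ac f) x = 0})"

definition poly_gal_group :: "'k::field poly \<Rightarrow> ('k alg_closure \<Rightarrow> 'k alg_closure) monoid" where
  "poly_gal_group f = gal_group (splitting_field f)"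

end

theory Submission
  imports Defs "HOL-Computational_Algebra.Primes"
begin

lemma dep_exists:
  fixes F :: "nat \<Rightarrow> nat \<Rightarrow> 'a::field"
  assumes "finite I" "card I > n"
  shows "\<exists>c. (\<exists>i\<in>I. c i \<noteq> 0) \<and> (\<forall>k<n. (\<Sum>i\<in>I. c i * F i k) = 0)"
  using assms
proof (induction n arbitrary: I F)
  case 0
  then obtain i where "i \<in> I" by (metis card.empty ex_in_conv less_nat_zero_code)
  then show ?case by (intro exI[of _ "\<lambda>_. 1"]) auto
next
  case (Suc n)
  show ?case
  proof (cases "\<forall>i\<in>I. F i n = 0")
    case True
    from Suc.IH[of I F] Suc.prems obtain c where c: "\<exists>i\<in>I. c i \<noteq> 0" "\<forall>k<n. (\<Sum>i\<in>I. c i * F i k) = 0"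
      by auto
    show ?thesis
    proof (intro exI[of _ c] conjI allI impI)
      fix k assume "k < Suc n"
      then consider "k < n" | "k = n" by linarith
      then show "(\<Sum>i\<in>I. c i * F i k) = 0"
        by cases (use c True in auto)
    qed (use c in auto)
  next
    case False
    then obtain k0 where k0: "k0 \<in> I" "F k0 n \<noteq> 0" by auto
    define J where "J = I - {k0}"
    have fJ: "finite J" using Suc.prems J_def by auto
    have cJ: "card J > n" using Suc.prems k0 J_def by (simp add: card_Diff_singleton)
    define G where "G i k = F i k - (F i n / F k0 n) * F k0 k" for i k
    from Suc.IH[OF fJ cJ, of G] obtain d where d: "\<exists>i\<in>J. d i \<noteq> 0" "\<forall>k<n. (\<Sum>i\<in>J. d i * G i k) = 0"
      by auto
    define S where "S = (\<Sum>i\<in>J. d i * F i n / F k0 n)"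
    define c where "c i = (if i = k0 then - S else d i)" for i
    have sumI: "(\<Sum>i\<in>I. c i * F i k) = c k0 * F k0 k + (\<Sum>i\<in>J. d i * F i k)" for k
    proof -
      have "(\<Sum>i\<in>I. c i * F i k) = c k0 * F k0 k + (\<Sum>i\<in>J. c i * F i k)"
        using k0 Suc.prems(1) J_def by (simp add: sum.remove)
      also have "(\<Sum>i\<in>J. c i * F i k) = (\<Sum>i\<in>J. d i * F i k)"
        by (rule sum.cong) (auto simp: c_def J_def)
      finally show ?thesis .
    qed
    show ?thesis
    proof (intro exI[of _ c] conjI allI impI)
      show "\<exists>i\<in>I. c i \<noteq> 0" using d(1) by (auto simp: c_def J_def)
    next
      fix k assume "k < Suc n"
      then consider "k < n" | "k = n" by linarith
      then show "(\<Sum>i\<in>I. c i * F i k) = 0"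
      proof cases
        case 1
        have "0 = (\<Sum>i\<in>J. d i * G i k)" using d(2) 1 by auto
        also have "\<dots> = (\<Sum>i\<in>J. d i * F i k) - F k0 k * S"
          by (simp add: G_def S_def right_diff_distrib sum_subtractf sum_distrib_left mult_ac)
        finally show ?thesis using sumI[of k] by (simp add: c_def)
      next
        case 2
        have "F k0 n * S = (\<Sum>i\<in>J. d i * F i n)"
          using k0(2) by (simp add: S_def sum_distrib_left)
        then show ?thesis using sumI[of k] 2 by (simp add: c_def mult.commute)
      qed
    qed
  qed
qed


no_notation fps_nth (infixl \<open>$\<close> 75)

lemma sum_split_add: "(\<Sum>t<j+m. f t) = (\<Sum>t<j. f t) + (\<Sum>i<m. f (j+i))" for j m :: nat
  by (induction m) (auto simp: add_ac)

lemma sum_lt1: "(\<Sum>i<(1::nat). f i) = f 0"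
  by simp

lemma ladder:
  assumes "P (1::nat)" "\<not> P N" "N \<ge> 1"
  shows "\<exists>m\<ge>1. P m \<and> \<not> P (Suc m)"
proof (rule ccontr)
  assume "\<not> ?thesis"
  hence step: "\<And>m. m \<ge> 1 \<Longrightarrow> P m \<Longrightarrow> P (Suc m)" by auto
  have "P (Suc k)" for k
  proof (induction k)
    case 0 show ?case using assms(1) by simp
  next
    case (Suc k) show ?case using step[of "Suc k"] Suc.IH by simp
  qed
  hence "P (Suc (N - 1))" .
  hence "P N" using assms(3) by simp
  thus False using assms by auto
qed


fun Ap :: "nat \<Rightarrow> (nat \<Rightarrow> 'a::comm_ring_1) \<Rightarrow> nat \<Rightarrow> 'a poly" where
  "Ap q g 0 = smult (g 0) (monom 1 q)"
| "Ap q g (Suc i) = (Ap q g i)^q + smult (g (Suc i)) (monom 1 q)"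

lemma poly_Ap0: "poly (Ap q g 0) t = g 0 * t^q"
  by (simp add: poly_monom)

lemma poly_ApS: "poly (Ap q g (Suc i)) t = (poly (Ap q g i) t)^q + g (Suc i) * t^q"
  by (simp add: poly_monom)

lemma Ap_dvd:
  assumes "q \<ge> 2"
  shows "[:0,1:]^2 dvd Ap q g i"
proof (induction i)
  have m: "[:0,1:]^2 dvd (monom 1 q :: 'a poly)"
    using assms by (simp add: monom_altdef le_imp_power_dvd)
  case 0 show ?case using m by (simp add: dvd_smult)
  case (Suc i)
  have "Ap q g i dvd (Ap q g i)^q" using assms by (simp add: dvd_power)
  hence "[:0,1:]^2 dvd (Ap q g i)^q" using Suc.IH dvd_trans by blast
  thus ?case using m by (simp add: dvd_smult)
qed

lemma Ap_degree:
  fixes g :: "nat \<Rightarrow> 'a::field"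
  assumes "q \<ge> 2" "g 0 \<noteq> 0"
  shows "degree (Ap q g i) = q^(Suc i)"
proof (induction i)
  case 0 show ?case using assms by (simp add: degree_monom_eq)
next
  case (Suc i)
  have nz: "Ap q g i \<noteq> 0" using Suc.IH assms by (metis degree_0 not_numeral_le_zero power_not_zero zero_less_Suc
        Suc_n_not_le_n)
  have d1: "degree ((Ap q g i)^q) = q^(Suc (Suc i))"
    using nz Suc.IH by (simp add: degree_power_eq)
  have "q < q^(Suc (Suc i))"
  proof -
    have "q^1 < q^(Suc (Suc i))" using assms(1) by (intro power_strict_increasing) auto
    thus ?thesis by simp
  qed
  moreover have "degree (smult (g (Suc i)) (monom 1 q)) \<le> q"
    by (simp add: degree_monom_eq degree_smult_le)
  ultimately have "degree (smult (g (Suc i)) (monom 1 q)) < degree ((Ap q g i)^q)"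
    using d1 by linarith
  thus ?case by (simp add: degree_add_eq_left d1)
qed

lemma Ap_fix:
  fixes g :: "nat \<Rightarrow> 'a::alg_closed_field"
  assumes "q \<ge> 2" "g 0 \<noteq> 0"
  shows "\<exists>t. t \<noteq> 0 \<and> poly (Ap q g i) t = t"
proof -
  obtain B where B: "Ap q g i = [:0,1:]^2 * B" using Ap_dvd[OF assms(1)] by (metis dvdE)
  have dA: "degree (Ap q g i) \<ge> 2"
  proof -
    have "q^1 \<le> q^(Suc i)" using assms(1) by (intro power_increasing) auto
    thus ?thesis using Ap_degree[of q g i, OF assms] assms(1) by (metis power_one_right order_trans)
  qed
  hence "B \<noteq> 0" using B by (metis degree_0 mult_zero_right not_numeral_le_zero)
  hence dB: "degree (Ap q g i) = 2 + degree B" using B by (simp add: degree_mult_eq degree_power_eq)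
  define P where "P = [:0,1:] * B + [:-1:]"
  have "degree ([:0,1:] * B) = 1 + degree B" using \<open>B \<noteq> 0\<close> by (simp add: degree_mult_eq)
  hence "degree P = 1 + degree B" unfolding P_def by (subst degree_add_eq_left) auto
  then obtain t where t: "poly P t = 0" using alg_closed_imp_poly_has_root by (metis zero_less_Suc plus_1_eq_Suc)
  hence t1: "t * poly B t = 1" by (simp add: P_def)
  hence "t \<noteq> 0" by auto
  moreover have "poly (Ap q g i) t = t" using t1 by (simp add: B power2_eq_square mult_ac)
  ultimately show ?thesis by blast
qed

locale frob =
  fixes n q r :: nat and E Ei :: "nat \<Rightarrow> nat \<Rightarrow> 'b::alg_closed_field"
  assumes char: "prime CHAR('b)" and qdef: "q = CHAR('b)^r" and rpos: "r > 0"
  and inv: "\<And>i k. i<n \<Longrightarrow> k<n \<Longrightarrow> (\<Sum>j<n. Ei i j * E j k) = (if i = k then 1 else 0)"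
begin

definition phi :: "'b vec \<Rightarrow> 'b vec" where
  "phi x = vec n (\<lambda>i. \<Sum>j<n. E i j * (x$j)^q)"

definition lc :: "nat set \<Rightarrow> (nat \<Rightarrow> 'b) \<Rightarrow> (nat \<Rightarrow> 'b vec) \<Rightarrow> 'b vec" where
  "lc I c F = vec n (\<lambda>k. \<Sum>i\<in>I. c i * F i $ k)"

lemma q2: "q \<ge> 2"
proof -
  have "CHAR('b) \<ge> 2" using char prime_ge_2_nat by blast
  hence "CHAR('b)^1 \<le> CHAR('b)^r" using rpos by (intro power_increasing) auto
  thus ?thesis using \<open>CHAR('b) \<ge> 2\<close> qdef by simp
qed

lemma pow_add: "(x + y :: 'b)^q = x^q + y^q"
  using freshmans_dream'[OF char qdef] .

lemma pow_sum: "(sum f A :: 'b)^q = (\<Sum>i\<in>A. f i ^ q)"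
  using freshmans_dream_sum'[OF char qdef] .

lemma pow_diff: "(x - y :: 'b)^q = x^q - y^q"
proof -
  have "x^q = ((x - y) + y)^q" by simp
  also have "\<dots> = (x-y)^q + y^q" by (rule pow_add)
  finally show ?thesis by simp
qed

lemma pow_inj: "(x :: 'b)^q = y^q \<Longrightarrow> x = y"
  using pow_diff[of x y] q2 by simp

lemma phi_carrier[simp]: "phi x \<in> carrier_vec n"
  by (simp add: phi_def)

lemma lc_carrier[simp]: "lc I c F \<in> carrier_vec n"
  by (simp add: lc_def)

lemma dim_phi[simp]: "dim_vec (phi x) = n" by (simp add: phi_def)
lemma dim_lc[simp]: "dim_vec (lc I c F) = n" by (simp add: lc_def)
lemma index_phi: "i < n \<Longrightarrow> phi x $ i = (\<Sum>j<n. E i j * (x$j)^q)" by (simp add: phi_def)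
lemma index_lc: "k < n \<Longrightarrow> lc I c F $ k = (\<Sum>i\<in>I. c i * F i $ k)" by (simp add: lc_def)

lemma phi_lc: "phi (lc I c F) = lc I (\<lambda>i. c i ^ q) (\<lambda>i. phi (F i))"
proof (rule eq_vecI)
  fix k assume "k < dim_vec (lc I (\<lambda>i. c i ^ q) (\<lambda>i. phi (F i)))"
  hence k: "k < n" by simp
  have "phi (lc I c F) $ k = (\<Sum>j<n. E k j * (\<Sum>i\<in>I. c i ^ q * F i $ j ^ q))"
    by (simp add: index_phi index_lc k pow_sum power_mult_distrib)
  also have "\<dots> = (\<Sum>j<n. \<Sum>i\<in>I. c i ^ q * (E k j * F i $ j ^ q))"
    by (simp add: sum_distrib_left mult_ac)
  also have "\<dots> = (\<Sum>i\<in>I. \<Sum>j<n. c i ^ q * (E k j * F i $ j ^ q))"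
    by (rule sum.swap)
  also have "\<dots> = (\<Sum>i\<in>I. c i ^ q * (\<Sum>j<n. E k j * F i $ j ^ q))"
    by (simp add: sum_distrib_left)
  finally show "phi (lc I c F) $ k = lc I (\<lambda>i. c i ^ q) (\<lambda>i. phi (F i)) $ k"
    by (simp add: index_lc index_phi k)
qed simp

lemma phi_add: "x \<in> carrier_vec n \<Longrightarrow> y \<in> carrier_vec n \<Longrightarrow> phi (x + y) = phi x + phi y"
  by (rule eq_vecI) (auto simp: index_phi pow_add distrib_left sum.distrib)

lemma phi_inj:
  assumes "x \<in> carrier_vec n" "y \<in> carrier_vec n" "phi x = phi y"
  shows "x = y"
proof (rule eq_vecI)
  have key: "z $ i ^ q = (\<Sum>j<n. Ei i j * phi z $ j)" if "i < n" for z i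
  proof -
    have "(\<Sum>j<n. Ei i j * phi z $ j) = (\<Sum>j<n. \<Sum>k<n. Ei i j * E j k * z $ k ^ q)"
      by (simp add: index_phi sum_distrib_left mult_ac)
    also have "\<dots> = (\<Sum>k<n. \<Sum>j<n. Ei i j * E j k * z $ k ^ q)"
      by (rule sum.swap)
    also have "\<dots> = (\<Sum>k<n. (\<Sum>j<n. Ei i j * E j k) * z $ k ^ q)"
      by (simp add: sum_distrib_right)
    also have "\<dots> = (\<Sum>k<n. (if i = k then z $ k ^ q else 0))"
      by (rule sum.cong) (auto simp: inv that)
    also have "\<dots> = z $ i ^ q" using that by simp
    finally show ?thesis by simp
  qed
  fix i assume "i < dim_vec y"
  hence i: "i < n" using assms by simp
  show "x $ i = y $ i" by (rule pow_inj) (simp add: key[OF i] assms(3))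
qed (use assms in simp)


definition ind2 :: "nat \<Rightarrow> (nat \<Rightarrow> 'b vec) \<Rightarrow> nat \<Rightarrow> (nat \<Rightarrow> 'b vec) \<Rightarrow> bool" where
  "ind2 j U m V \<longleftrightarrow> (\<forall>b c. (\<forall>k<n. (\<Sum>l<j. b l * U l $ k) + (\<Sum>i<m. c i * V i $ k) = 0)
      \<longrightarrow> (\<forall>l<j. b l = 0) \<and> (\<forall>i<m. c i = 0))"

lemma ind2D:
  assumes "ind2 j U m V" "\<forall>k<n. (\<Sum>l<j. b l * U l $ k) + (\<Sum>i<m. c i * V i $ k) = 0"
  shows "(\<forall>l<j. b l = 0) \<and> (\<forall>i<m. c i = 0)"
  using assms(1)[unfolded ind2_def, THEN spec, THEN spec, THEN mp, OF assms(2)] by blast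

lemma ind2_bound:
  assumes "ind2 j U m V"
  shows "j + m \<le> n"
proof (rule ccontr)
  assume "\<not> j + m \<le> n"
  define F where "F t k = (if t < j then U t $ k else V (t-j) $ k)" for t k
  have "card {..<j+m} > n" using \<open>\<not> j + m \<le> n\<close> by simp
  from dep_exists[OF _ this, of F] obtain c where
    c: "\<exists>t\<in>{..<j+m}. c t \<noteq> 0" "\<forall>k<n. (\<Sum>t<j+m. c t * F t k) = 0" by auto
  have "\<forall>k<n. (\<Sum>l<j. c l * U l $ k) + (\<Sum>i<m. c (j+i) * V i $ k) = 0"
  proof (intro allI impI)
    fix k assume "k < n"
    have "(\<Sum>t<j+m. c t * F t k) = (\<Sum>t<j. c t * F t k) + (\<Sum>i<m. c (j+i) * F (j+i) k)"
      by (rule sum_split_add)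
    also have "(\<Sum>t<j. c t * F t k) = (\<Sum>l<j. c l * U l $ k)"
      by (rule sum.cong) (auto simp: F_def)
    also have "(\<Sum>i<m. c (j+i) * F (j+i) k) = (\<Sum>i<m. c (j+i) * V i $ k)"
      by (rule sum.cong) (auto simp: F_def)
    finally show "(\<Sum>l<j. c l * U l $ k) + (\<Sum>i<m. c (j+i) * V i $ k) = 0"
      using c(2) \<open>k < n\<close> by simp
  qed
  from ind2D[OF assms this] have z: "(\<forall>l<j. c l = 0) \<and> (\<forall>i<m. c (j+i) = 0)" .
  from c(1) obtain t where t: "t < j + m" "c t \<noteq> 0" by auto
  show False
  proof (cases "t < j")
    case True then show False using z t by auto
  next
    case False
    then have "t = j + (t - j)" "t - j < m" using t by auto
    then show False using z t by metis
  qed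
qed

lemma exists_e:
  assumes "j < n" "ind2 j U 0 V0"
  shows "\<exists>e\<in>carrier_vec n. ind2 j U 1 (\<lambda>_. e)"
proof -
  have "card {..<n} > j" using assms by simp
  from dep_exists[OF _ this, of "\<lambda>k l. U l $ k"] obtain y where
    y: "\<exists>k\<in>{..<n}. y k \<noteq> 0" "\<forall>l<j. (\<Sum>k<n. y k * U l $ k) = 0" by auto
  from y(1) obtain k0 where k0: "k0 < n" "y k0 \<noteq> 0" by auto
  define e :: "'b vec" where "e = unit_vec n k0"
  have "ind2 j U 1 (\<lambda>_. e)"
    unfolding ind2_def
  proof (intro allI impI)
    fix b c :: "nat \<Rightarrow> 'b"
    assume rel: "\<forall>k<n. (\<Sum>l<j. b l * U l $ k) + (\<Sum>i<1. c i * e $ k) = 0"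
    have "0 = (\<Sum>k<n. y k * ((\<Sum>l<j. b l * U l $ k) + (\<Sum>i<1. c i * e $ k)))"
      using rel by simp
    also have "\<dots> = (\<Sum>k<n. \<Sum>l<j. b l * (y k * U l $ k)) + c 0 * (\<Sum>k<n. y k * e $ k)"
      by (simp add: distrib_left sum.distrib sum_distrib_left mult_ac)
    also have "(\<Sum>k<n. \<Sum>l<j. b l * (y k * U l $ k)) = (\<Sum>l<j. \<Sum>k<n. b l * (y k * U l $ k))"
      by (rule sum.swap)
    also have "\<dots> = (\<Sum>l<j. b l * (\<Sum>k<n. y k * U l $ k))"
      by (simp add: sum_distrib_left)
    also have "\<dots> = 0" using y(2) by simp
    also have "(\<Sum>k<n. y k * e $ k) = (\<Sum>k<n. if k = k0 then y k0 else 0)"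
      by (rule sum.cong) (auto simp: e_def k0)
    also have "\<dots> = y k0" using k0 by simp
    finally have "c 0 = 0" using k0 by simp
    hence "\<forall>k<n. (\<Sum>l<j. b l * U l $ k) + (\<Sum>i<0. c i * V0 i $ k) = 0" using rel by simp
    hence "\<forall>l<j. b l = 0" using ind2D[OF assms(2)] by blast
    thus "(\<forall>l<j. b l = 0) \<and> (\<forall>i<1. c i = 0)" using \<open>c 0 = 0\<close> by simp
  qed
  thus ?thesis by (auto simp: e_def)
qed


lemma root_q: "\<exists>z. z ^ q = (a::'b)"
proof -
  have "degree (monom 1 q + [:-a:]) = q"
    using q2 by (subst degree_add_eq_left) (auto simp: degree_monom_eq)
  then obtain z where "poly (monom 1 q + [:-a:]) z = 0"
    using alg_closed_imp_poly_has_root q2 by (metis not_numeral_le_zero not_gr_zero)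
  thus ?thesis by (intro exI[of _ z]) (simp add: poly_monom)
qed

lemma root_as: "\<exists>z. z - z ^ q = (a::'b)"
proof -
  have d1: "degree ([:a, -1:] :: 'b poly) < q" using q2 by simp
  have "degree (monom 1 q + [:a, -1:]) = q"
    using q2 d1 by (subst degree_add_eq_left) (auto simp: degree_monom_eq)
  then obtain z where "poly (monom 1 q + [:a, -1:]) z = 0"
    using alg_closed_imp_poly_has_root q2 by (metis not_numeral_le_zero not_gr_zero)
  thus ?thesis by (intro exI[of _ z]) (simp add: poly_monom algebra_simps)
qed


lemma sumU: "\<forall>l<j. U l \<in> carrier_vec n \<and> phi (U l) = U l \<Longrightarrow> (\<Sum>l<j. f l * phi (U l) $ k) = (\<Sum>l<j. f l * U l $ k)"
  by (rule sum.cong) auto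

lemma ind2_cong:
  assumes "\<And>i. i < m \<Longrightarrow> V i = V' i"
  shows "ind2 j U m V = ind2 j U m V'"
proof -
  have "(\<Sum>i<m. c i * V i $ k) = (\<Sum>i<m. c i * V' i $ k)" for c k
    by (rule sum.cong) (auto simp: assms)
  thus ?thesis unfolding ind2_def by simp
qed

lemma extend:
  assumes j: "j < n" and U: "\<forall>l<j. U l \<in> carrier_vec n \<and> phi (U l) = U l"
    and ind: "ind2 j U 0 V0"
  shows "\<exists>w \<in> carrier_vec n. phi w = w \<and> ind2 j U 1 (\<lambda>_. w)"
proof -
  obtain e where e: "e \<in> carrier_vec n" "ind2 j U 1 (\<lambda>_. e)" using exists_e[OF j ind] by blast
  define V where "V i = (phi ^^ i) e" for i
  have VS: "V (Suc i) = phi (V i)" for i by (simp add: V_def)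
  have V0: "V 0 = e" by (simp add: V_def)
  have Vc: "V i \<in> carrier_vec n" for i
  proof (cases i)
    case 0 then show ?thesis using e V0 by simp
  next
    case (Suc i') then show ?thesis by (simp add: VS)
  qed
  have ind1: "ind2 j U 1 V" using e(2) by (subst ind2_cong[where V'="\<lambda>_. e"]) (auto simp: V0)
  have notN: "\<not> ind2 j U (n+1) V"
  proof
    assume "ind2 j U (n+1) V"
    from ind2_bound[OF this] show False by simp
  qed
  have "\<exists>m\<ge>1. ind2 j U m V \<and> \<not> ind2 j U (Suc m) V"
    by (rule ladder[of "\<lambda>m. ind2 j U m V" "n+1"]) (use ind1 notN in simp_all)
  then obtain m where m: "m \<ge> 1" "ind2 j U m V" "\<not> ind2 j U (Suc m) V"
    by blast
  obtain m' where m': "m = Suc m'" using m(1) by (cases m) auto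
  from m(3) obtain b c :: "nat \<Rightarrow> 'b" where
    rel: "\<forall>k<n. (\<Sum>l<j. b l * U l $ k) + (\<Sum>i<Suc m. c i * V i $ k) = 0" and
    nz: "\<not> ((\<forall>l<j. b l = 0) \<and> (\<forall>i<Suc m. c i = 0))"
    unfolding ind2_def not_all not_imp by (elim exE conjE) blast
  have cm: "c m \<noteq> 0"
  proof
    assume cm0: "c m = 0"
    hence "\<forall>k<n. (\<Sum>l<j. b l * U l $ k) + (\<Sum>i<m. c i * V i $ k) = 0" using rel by simp
    from ind2D[OF m(2) this] cm0 nz show False using less_Suc_eq by auto
  qed
  define \<gamma> where "\<gamma> i = - c i / c m" for i
  define \<beta> where "\<beta> l = - b l / c m" for l
  have rel2: "V m $ k = (\<Sum>i<m. \<gamma> i * V i $ k) + (\<Sum>l<j. \<beta> l * U l $ k)" if k: "k < n" for k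
  proof -
    have h1: "c m * (\<Sum>i<m. \<gamma> i * V i $ k) = - (\<Sum>i<m. c i * V i $ k)"
      by (simp add: \<gamma>_def sum_distrib_left cm sum_negf)
    have h2: "c m * (\<Sum>l<j. \<beta> l * U l $ k) = - (\<Sum>l<j. b l * U l $ k)"
      by (simp add: \<beta>_def sum_distrib_left cm sum_negf)
    have "c m * V m $ k = - (\<Sum>l<j. b l * U l $ k) - (\<Sum>i<m. c i * V i $ k)"
      using rel k by (simp add: algebra_simps eq_neg_iff_add_eq_0)
    also have "\<dots> = c m * ((\<Sum>i<m. \<gamma> i * V i $ k) + (\<Sum>l<j. \<beta> l * U l $ k))"
      by (simp add: distrib_left h1 h2)
    finally show ?thesis using cm by simp
  qed
  have shg: "(\<Sum>i<m. \<gamma> i * V i $ k) = \<gamma> 0 * V 0 $ k + (\<Sum>i<m'. \<gamma> (Suc i) * V (Suc i) $ k)" for k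
    unfolding m' by (rule sum.lessThan_Suc_shift)
  have g0: "\<gamma> 0 \<noteq> 0"
  proof
    assume g0: "\<gamma> 0 = 0"
    have "\<forall>i. \<exists>z. z ^ q = \<gamma> (Suc i)" using root_q by blast
    then obtain r where r: "\<forall>i. r i ^ q = \<gamma> (Suc i)" by (metis choice)
    have "\<forall>l. \<exists>z. z ^ q = \<beta> l" using root_q by blast
    then obtain s where s: "\<forall>l. s l ^ q = \<beta> l" by (metis choice)
    define x where "x = lc {..<m'} r V + lc {..<j} s U"
    have xc: "x \<in> carrier_vec n" by (simp add: x_def)
    have "phi x = phi (V m')"
    proof (rule eq_vecI)
      fix k assume "k < dim_vec (phi (V m'))"
      hence k: "k < n" by simp
      have "phi x $ k = (\<Sum>i<m'. \<gamma> (Suc i) * V (Suc i) $ k) + (\<Sum>l<j. \<beta> l * U l $ k)"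
        unfolding x_def using k U
        by (simp add: phi_add phi_lc index_lc r s sumU[OF U] flip: VS)
      also have "\<dots> = V m $ k"
        using rel2[OF k] g0 shg[of k] by simp
      finally show "phi x $ k = phi (V m') $ k" by (simp add: m' VS)
    qed simp
    hence xV: "x = V m'" using phi_inj[OF xc Vc] by blast
    define c' where "c' i = (if i < m' then - r i else 1)" for i
    have "\<forall>k<n. (\<Sum>l<j. (- s l) * U l $ k) + (\<Sum>i<m. c' i * V i $ k) = 0"
    proof (intro allI impI)
      fix k assume k: "k < n"
      have "V m' $ k = (\<Sum>i<m'. r i * V i $ k) + (\<Sum>l<j. s l * U l $ k)"
        using k by (simp add: xV[symmetric] x_def index_lc)
      moreover have "(\<Sum>i<m'. c' i * V i $ k) = - (\<Sum>i<m'. r i * V i $ k)"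
        by (simp add: c'_def sum_negf)
      ultimately show "(\<Sum>l<j. (- s l) * U l $ k) + (\<Sum>i<m. c' i * V i $ k) = 0"
        by (simp add: m' c'_def sum_negf)
    qed
    from ind2D[OF m(2) this] have "c' m' = 0" using m' by simp
    thus False by (simp add: c'_def)
  qed
  obtain t where t: "t \<noteq> 0" "poly (Ap q \<gamma> m') t = t" using Ap_fix[of q \<gamma> m', OF q2 g0] by blast
  define a where "a i = poly (Ap q \<gamma> i) t" for i
  have a0: "a 0 = \<gamma> 0 * t^q" unfolding a_def by (rule poly_Ap0)
  have aS: "a (Suc i) = a i ^ q + \<gamma> (Suc i) * t^q" for i unfolding a_def by (rule poly_ApS)
  have am: "a m' = t" using t by (simp add: a_def)
  define v where "v = lc {..<m} a V"
  have sha: "(\<Sum>i<m. a i * V i $ k) = a 0 * V 0 $ k + (\<Sum>i<m'. a (Suc i) * V (Suc i) $ k)" for k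
    unfolding m' by (rule sum.lessThan_Suc_shift)
  have key: "phi v $ k = v $ k + t^q * (\<Sum>l<j. \<beta> l * U l $ k)" if k: "k < n" for k
  proof -
    have "phi v $ k = (\<Sum>i<m. a i ^ q * V (Suc i) $ k)"
      using k by (simp add: v_def phi_lc index_lc VS)
    also have "\<dots> = (\<Sum>i<m'. a i ^ q * V (Suc i) $ k) + t^q * V m $ k"
      by (simp add: m' am)
    also have "V m $ k = \<gamma> 0 * V 0 $ k + (\<Sum>i<m'. \<gamma> (Suc i) * V (Suc i) $ k) + (\<Sum>l<j. \<beta> l * U l $ k)"
      using rel2[OF k] shg[of k] by simp
    also have "v $ k = a 0 * V 0 $ k + (\<Sum>i<m'. a (Suc i) * V (Suc i) $ k)"
      using k sha[of k] by (simp add: v_def index_lc)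
    ultimately show ?thesis
      by (simp add: a0 aS algebra_simps sum.distrib sum_distrib_left)
  qed
  have "\<forall>l. \<exists>z. z - z ^ q = t^q * \<beta> l" using root_as by blast
  then obtain gg where gg: "\<forall>l. gg l - gg l ^ q = t^q * \<beta> l" by (metis choice)
  define w where "w = v + lc {..<j} gg U"
  have wc: "w \<in> carrier_vec n" by (simp add: w_def v_def)
  have phiw: "phi w = w"
  proof (rule eq_vecI)
    fix k assume "k < dim_vec w"
    hence k: "k < n" using wc by simp
    have "phi w $ k = phi v $ k + (\<Sum>l<j. gg l ^ q * U l $ k)"
      using k by (simp add: w_def v_def phi_add phi_lc index_lc sumU[OF U])
    also have "\<dots> = v $ k + (\<Sum>l<j. (t^q * \<beta> l + gg l ^ q) * U l $ k)"
      by (simp add: key[OF k] algebra_simps sum.distrib sum_distrib_left)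
    also have "(\<Sum>l<j. (t^q * \<beta> l + gg l ^ q) * U l $ k) = (\<Sum>l<j. gg l * U l $ k)"
      by (rule sum.cong) (auto simp: gg[rule_format, symmetric])
    finally show "phi w $ k = w $ k" using k by (simp add: w_def v_def index_lc)
  qed (insert wc, auto)
  have "ind2 j U 1 (\<lambda>_. w)"
    unfolding ind2_def
  proof (intro allI impI)
    fix b' c' :: "nat \<Rightarrow> 'b"
    assume r: "\<forall>k<n. (\<Sum>l<j. b' l * U l $ k) + (\<Sum>i<1. c' i * w $ k) = 0"
    have "\<forall>k<n. (\<Sum>l<j. (b' l + c' 0 * gg l) * U l $ k) + (\<Sum>i<m. (c' 0 * a i) * V i $ k) = 0"
    proof (intro allI impI)
      fix k assume k: "k < n"
      have "0 = (\<Sum>l<j. b' l * U l $ k) + c' 0 * w $ k" using r k by simp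
      also have "\<dots> = (\<Sum>l<j. (b' l + c' 0 * gg l) * U l $ k) + (\<Sum>i<m. (c' 0 * a i) * V i $ k)"
        using k by (simp add: w_def v_def index_lc algebra_simps sum.distrib sum_distrib_left)
      finally show "(\<Sum>l<j. (b' l + c' 0 * gg l) * U l $ k) + (\<Sum>i<m. (c' 0 * a i) * V i $ k) = 0" by simp
    qed
    from ind2D[OF m(2) this] have z: "\<forall>l<j. b' l + c' 0 * gg l = 0" "c' 0 * a m' = 0"
      using m' by auto
    hence "c' 0 = 0" using am t by simp
    thus "(\<forall>l<j. b' l = 0) \<and> (\<forall>i<1. c' i = 0)" using z by simp
  qed
  thus ?thesis using wc phiw by blast
qed


lemma build:
  "j \<le> n \<Longrightarrow> \<exists>U. (\<forall>l<j. U l \<in> carrier_vec n \<and> phi (U l) = U l) \<and> ind2 j U 0 U"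
proof (induction j)
  case 0 show ?case by (auto simp: ind2_def)
next
  case (Suc j)
  then obtain U where U: "\<forall>l<j. U l \<in> carrier_vec n \<and> phi (U l) = U l" "ind2 j U 0 U" by auto
  obtain w where w: "w \<in> carrier_vec n" "phi w = w" "ind2 j U 1 (\<lambda>_. w)"
    using extend[of j U U] Suc.prems U by auto
  define U' where "U' = U(j := w)"
  have A: "\<forall>l<Suc j. U' l \<in> carrier_vec n \<and> phi (U' l) = U' l"
    using U w by (auto simp: U'_def less_Suc_eq)
  have B: "ind2 (Suc j) U' 0 U'"
    unfolding ind2_def
  proof (intro allI impI)
    fix b c :: "nat \<Rightarrow> 'b"
    assume r: "\<forall>k<n. (\<Sum>l<Suc j. b l * U' l $ k) + (\<Sum>i<0. c i * U' i $ k) = 0"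
    have s: "(\<Sum>l<j. b l * U' l $ k) = (\<Sum>l<j. b l * U l $ k)" for k
      by (rule sum.cong) (auto simp: U'_def)
    have "\<forall>k<n. (\<Sum>l<j. b l * U l $ k) + (\<Sum>i<(1::nat). b j * w $ k) = 0"
      unfolding sum_lt1 using r by (simp add: s U'_def)
    from ind2D[OF w(3) this] show "(\<forall>l<Suc j. b l = 0) \<and> (\<forall>i<0. c i = 0)"
      by (auto simp: less_Suc_eq)
  qed
  show ?case using A B by blast
qed

lemma lc_eq_imp:
  assumes "ind2 j U 0 U" "lc {..<j} \<beta> U = lc {..<j} \<beta>' U"
  shows "\<forall>l<j. \<beta> l = \<beta>' l"
proof -
  have "\<forall>k<n. (\<Sum>l<j. (\<beta> l - \<beta>' l) * U l $ k) + (\<Sum>i<0. \<beta> i * U i $ k) = 0"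
  proof (intro allI impI)
    fix k assume k: "k < n"
    have "lc {..<j} \<beta> U $ k = lc {..<j} \<beta>' U $ k" using assms(2) by simp
    thus "(\<Sum>l<j. (\<beta> l - \<beta>' l) * U l $ k) + (\<Sum>i<0. \<beta> i * U i $ k) = 0"
      using k by (simp add: index_lc left_diff_distrib sum_subtractf)
  qed
  from ind2D[OF assms(1) this] show ?thesis by simp
qed

lemma span:
  assumes U: "\<forall>l<n. U l \<in> carrier_vec n \<and> phi (U l) = U l" and ind: "ind2 n U 0 U"
    and x: "x \<in> carrier_vec n"
  shows "\<exists>\<beta>. x = lc {..<n} \<beta> U"
proof -
  have "\<not> ind2 n U 1 (\<lambda>_. x)"
  proof
    assume "ind2 n U 1 (\<lambda>_. x)"
    from ind2_bound[OF this] show False by simp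
  qed
  then obtain b c :: "nat \<Rightarrow> 'b" where
    rel: "\<forall>k<n. (\<Sum>l<n. b l * U l $ k) + (\<Sum>i<1. c i * x $ k) = 0" and
    nz: "\<not> ((\<forall>l<n. b l = 0) \<and> (\<forall>i<1. c i = 0))"
    unfolding ind2_def not_all not_imp by (elim exE conjE) blast
  have c0: "c 0 \<noteq> 0"
  proof
    assume c0: "c 0 = 0"
    hence "\<forall>k<n. (\<Sum>l<n. b l * U l $ k) + (\<Sum>i<0. c i * U i $ k) = 0" using rel by simp
    from ind2D[OF ind this] c0 nz show False by auto
  qed
  define \<beta> where "\<beta> l = - b l / c 0" for l
  have "x = lc {..<n} \<beta> U"
  proof (rule eq_vecI)
    fix k assume "k < dim_vec (lc {..<n} \<beta> U)"
    hence k: "k < n" by simp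
    have h: "c 0 * (\<Sum>l<n. \<beta> l * U l $ k) = - (\<Sum>l<n. b l * U l $ k)"
      by (simp add: \<beta>_def sum_distrib_left c0 sum_negf)
    have "c 0 * x $ k = - (\<Sum>l<n. b l * U l $ k)"
      using rel k by (simp add: eq_neg_iff_add_eq_0 add.commute)
    hence "c 0 * x $ k = c 0 * (\<Sum>l<n. \<beta> l * U l $ k)" using h by simp
    thus "x $ k = lc {..<n} \<beta> U $ k" using c0 k by (simp add: index_lc)
  qed (use x in simp)
  thus ?thesis by blast
qed

lemma phi_lcU:
  assumes U: "\<forall>l<j. U l \<in> carrier_vec n \<and> phi (U l) = U l"
  shows "phi (lc {..<j} \<beta> U) = lc {..<j} (\<lambda>l. \<beta> l ^ q) U"
  by (rule eq_vecI) (auto simp: phi_lc index_lc sumU[OF U])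

lemma fixed_coeffs:
  assumes U: "\<forall>l<n. U l \<in> carrier_vec n \<and> phi (U l) = U l" and ind: "ind2 n U 0 U"
    and "phi (lc {..<n} \<beta> U) = lc {..<n} \<beta> U"
  shows "\<forall>l<n. \<beta> l ^ q = \<beta> l"
  using lc_eq_imp[OF ind, of "\<lambda>l. \<beta> l ^ q" \<beta>] assms(3) phi_lcU[OF U] by simp

end



lemma gen_field_subfield: "is_subfield (gen_field S)"
  unfolding gen_field_def is_subfield_def by auto

lemma gen_field_incl: "S \<subseteq> gen_field S"
  unfolding gen_field_def by auto

lemma gen_field_least: "is_subfield L \<Longrightarrow> S \<subseteq> L \<Longrightarrow> gen_field S \<subseteq> L"
  unfolding gen_field_def by auto

lemma gen_field_mono: "S \<subseteq> T \<Longrightarrow> gen_field S \<subseteq> gen_field T"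
  unfolding gen_field_def by auto

theorem mainTheorem10:
  fixes D :: "'k::field mat" and f :: "'k poly" and q n r :: nat
  assumes "prime (CHAR('k))" and "r > 0" and "q = CHAR('k) ^ r"
    and "card (Fq q :: 'k set) = q"
    and "n > 0"
    and "D \<in> carrier_mat n n" and "invertible_mat D"
    and "degree f = q ^ n"
    and "\<forall>x\<in>frob_fixed q D UNIV. \<forall>y\<in>frob_fixed q D UNIV. x $ 0 = y $ 0 \<longrightarrow> x = y"
    and "\<forall>x\<in>frob_fixed q D UNIV. \<forall>i<n. x $ i \<in> adjoin (x $ 0)"
    and "\<forall>x\<in>frob_fixed q D UNIV. poly (map_poly to_ac f) (x $ 0) = 0"
  shows "frob_gal_group q D \<cong> poly_gal_group f"
proof -
  from assms(7) obtain B where B: "inverts_mat D B" "inverts_mat B D"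
    unfolding invertible_mat_def by blast
  have Dr: "dim_row D = n" and Dc: "dim_col D = n" using assms(6) by auto
  have "dim_col (D * B) = dim_col (1\<^sub>m (dim_row D))" using B(1) by (simp add: inverts_mat_def)
  hence Bc: "dim_col B = n" using Dr by simp
  have "dim_col (B * D) = dim_col (1\<^sub>m (dim_row B))" using B(2) by (simp add: inverts_mat_def)
  hence Br: "dim_row B = n" using Dc by simp
  define E where "E i j = to_ac (D $$ (i,j))" for i j
  define Ei where "Ei i j = to_ac (B $$ (i,j))" for i j
  have inv: "(\<Sum>j<n. Ei i j * E j k) = (if i = k then 1 else 0)" if "i < n" "k < n" for i k
  proof -
    have "(B * D) $$ (i,k) = 1\<^sub>m n $$ (i,k)" using B(2) Br by (simp add: inverts_mat_def)
    hence "(\<Sum>j\<in>{0..<n}. B $$ (i,j) * D $$ (j,k)) = (if i = k then 1 else 0)"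
      using that Br Bc Dr Dc by (simp add: scalar_prod_def)
    hence "to_ac (\<Sum>j\<in>{0..<n}. B $$ (i,j) * D $$ (j,k)) = (if i = k then 1 else 0)" by simp
    thus ?thesis by (simp add: to_ac_sum Ei_def E_def atLeast0LessThan)
  qed
  interpret F: frob n q r E Ei
    by unfold_locales (use assms(1-3) inv in auto)

  have fa: "frob_apply q D x = F.phi x" if "dim_vec x = n" for x
  proof (rule eq_vecI)
    fix i assume "i < dim_vec (F.phi x)"
    hence i: "i < n" by simp
    have "frob_apply q D x $ i = (\<Sum>j\<in>{0..<n}. to_ac (D $$ (i,j)) * x $ j ^ q)"
      using i that Dr Dc by (simp add: frob_apply_def scalar_prod_def)
    also have "\<dots> = F.phi x $ i" using i by (simp add: F.index_phi E_def atLeast0LessThan)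
    finally show "frob_apply q D x $ i = F.phi x $ i" .
  qed (simp add: frob_apply_def Dr)
  define S where "S = {x. x \<in> carrier_vec n \<and> F.phi x = x}"
  have FF: "frob_fixed q D L = {x \<in> S. \<forall>i<n. x $ i \<in> L}" for L
  proof (intro subset_antisym subsetI)
    fix x assume "x \<in> frob_fixed q D L"
    hence x: "dim_vec x = n" "\<forall>i<n. x$i \<in> L" "frob_apply q D x = x"
      by (auto simp: frob_fixed_def Dr)
    have "F.phi x = x" using x(3) fa[OF x(1)] by metis
    moreover have "x \<in> carrier_vec n" using x(1) by (rule carrier_vecI)
    ultimately show "x \<in> {x \<in> S. \<forall>i<n. x $ i \<in> L}" using x(2) unfolding S_def by blast
  next
    fix x assume "x \<in> {x \<in> S. \<forall>i<n. x $ i \<in> L}"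
    hence x0: "x \<in> carrier_vec n" "\<forall>i<n. x$i \<in> L" "F.phi x = x"
      unfolding S_def by blast+
    hence x: "dim_vec x = n" "\<forall>i<n. x$i \<in> L" "F.phi x = x" by auto
    have "frob_apply q D x = x" using x(3) fa[OF x(1)] by metis
    thus "x \<in> frob_fixed q D L" using x(1,2) by (simp add: frob_fixed_def Dr)
  qed
  have S_eq: "frob_fixed q D UNIV = S" using FF by auto
  obtain U where U: "\<forall>l<n. U l \<in> carrier_vec n \<and> F.phi (U l) = U l" "F.ind2 n U 0 U"
    using F.build[of n, OF le_refl] by blast
  define Lists where "Lists = {cs. set cs \<subseteq> (Fq q :: 'k alg_closure set) \<and> length cs = n}"
  define vl where "vl cs = F.lc {..<n} (\<lambda>i. cs ! i) U" for cs
  have vl_fix: "cs \<in> Lists \<Longrightarrow> vl cs \<in> S" for cs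
  proof -
    assume cs: "cs \<in> Lists"
    have "F.phi (vl cs) = F.lc {..<n} (\<lambda>i. (cs ! i) ^ q) U" unfolding vl_def by (rule F.phi_lcU[OF U(1)])
    also have "\<dots> = vl cs" unfolding vl_def
      by (rule eq_vecI) (use cs in \<open>auto simp: F.index_lc Lists_def Fq_def intro!: sum.cong dest!: nth_mem\<close>)
    finally show ?thesis by (simp add: S_def vl_def)
  qed
  have S_img: "S = vl ` Lists"
  proof
    show "vl ` Lists \<subseteq> S" using vl_fix by auto
  next
    show "S \<subseteq> vl ` Lists"
    proof
      fix x assume x: "x \<in> S"
      obtain \<beta> where \<beta>: "x = F.lc {..<n} \<beta> U" using F.span[OF U] x by (auto simp: S_def)
      have fixc: "\<forall>l<n. \<beta> l ^ q = \<beta> l" using F.fixed_coeffs[OF U] x \<beta> by (simp add: S_def)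
      define cs where "cs = map \<beta> [0..<n]"
      have "cs \<in> Lists" using fixc by (auto simp: cs_def Lists_def Fq_def)
      moreover have "vl cs = x" unfolding \<beta> vl_def
        by (rule eq_vecI) (auto simp: F.index_lc cs_def intro!: sum.cong)
      ultimately show "x \<in> vl ` Lists" by blast
    qed
  qed
  have inj: "inj_on vl Lists"
  proof
    fix cs cs' assume cs: "cs \<in> Lists" "cs' \<in> Lists" "vl cs = vl cs'"
    have "\<forall>l<n. cs ! l = cs' ! l" using F.lc_eq_imp[OF U(2)] cs(3) by (simp add: vl_def)
    thus "cs = cs'" using cs by (auto simp: Lists_def intro: nth_equalityI)
  qed

  have Ufix: "U l \<in> S" if "l < n" for l using U(1) that by (simp add: S_def)
  have q2: "q \<ge> 2" by (rule F.q2)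
  define P :: "'k alg_closure poly" where "P = monom 1 q + [:0, -1:]"
  have degP: "degree P = q"
    unfolding P_def using q2 by (subst degree_add_eq_left) (auto simp: degree_monom_eq)
  hence P0: "P \<noteq> 0" using q2 by auto
  have FqP: "(Fq q :: 'k alg_closure set) \<subseteq> {x. poly P x = 0}"
    by (auto simp: Fq_def P_def poly_monom)
  have finFq: "finite (Fq q :: 'k alg_closure set)"
    using poly_roots_finite[OF P0] FqP finite_subset by blast
  have "card (Fq q :: 'k set) = q" by (rule assms(4))
  hence finFqk: "finite (Fq q :: 'k set)" using q2 card.infinite by force
  have "to_ac ` (Fq q :: 'k set) \<subseteq> Fq q" by (auto simp: Fq_def simp flip: to_ac_power)
  hence "card (to_ac ` (Fq q :: 'k set)) \<le> card (Fq q :: 'k alg_closure set)"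
    using finFq by (rule card_mono[rotated])
  moreover have "inj_on to_ac (Fq q :: 'k set)" using inj_to_ac by (rule inj_on_subset) simp
  hence "card (to_ac ` (Fq q :: 'k set)) = q" using assms(4) by (simp add: card_image)
  ultimately have cardFq: "q \<le> card (Fq q :: 'k alg_closure set)" by simp
  have finLists: "finite Lists" unfolding Lists_def using finFq by (rule finite_lists_length_eq)
  have cardLists: "card Lists = card (Fq q :: 'k alg_closure set) ^ n"
    unfolding Lists_def using finFq by (rule card_lists_length_eq)
  have finS: "finite S" using S_img finLists by simp
  have cardS: "card S = card Lists" using S_img card_image[OF inj] by simp
  have cardS_ge: "card S \<ge> q ^ n" using cardS cardLists cardFq by (simp add: power_mono)
  define g where "g = map_poly to_ac f"
  have degg: "degree g = q ^ n" unfolding g_def using assms(8) by (simp add: degree_map_poly)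
  hence g0: "g \<noteq> 0" using q2 by (metis degree_0 power_eq_0_iff not_numeral_le_zero)
  define R where "R = {x. poly g x = 0}"
  have finR: "finite R" unfolding R_def using poly_roots_finite[OF g0] .
  have cardR: "card R \<le> q ^ n" unfolding R_def using card_poly_roots_bound[OF g0] degg by simp
  have imgR: "(\<lambda>x. x $ 0) ` S \<subseteq> R" using assms(11) S_eq by (auto simp: R_def g_def)
  have injS: "inj_on (\<lambda>x. x $ 0) S" using assms(9) S_eq by (auto intro: inj_onI)
  have "card ((\<lambda>x. x $ 0) ` S) = card S" using card_image[OF injS] .
  moreover have "card ((\<lambda>x. x $ 0) ` S) \<le> card R" by (rule card_mono[OF finR imgR])
  ultimately have "card ((\<lambda>x. x $ 0) ` S) = card R" using cardR cardS_ge by linarith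
  hence R_eq: "(\<lambda>x. x $ 0) ` S = R" by (rule card_subset_eq[OF finR imgR])

  define C where "C = {x $ i | x i. x \<in> S \<and> i < n}"
  define L0 where "L0 = gen_field (base_field \<union> C)"
  have CL0: "C \<subseteq> L0" and baseL0: "base_field \<subseteq> L0"
    using gen_field_incl[of "base_field \<union> C"] by (auto simp: L0_def)
  have "\<forall>x\<in>S. \<forall>i<n. x $ i \<in> L0" using CL0 unfolding C_def by blast
  hence FL0: "frob_fixed q D L0 = S" using FF[of L0] by blast
  have vecbs: "vec n (\<lambda>j. \<Sum>i<n. cs ! i * (map U [0..<n] ! i) $ j) = vl cs" for cs
    by (rule eq_vecI) (auto simp: vl_def F.index_lc intro!: sum.cong)
  have dimS: "dim_vec x = n" if "x \<in> S" for x using that by (simp add: S_def)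
  have hasdim: "has_Fq_dim q S n"
    unfolding has_Fq_dim_def
  proof (intro exI[of _ "map U [0..<n]"] conjI ballI allI impI)
    show "length (map U [0..<n]) = n" by simp
    show "set (map U [0..<n]) \<subseteq> S" using Ufix by auto
  next
    fix x assume x: "x \<in> S"
    then obtain cs where cs: "cs \<in> Lists" "x = vl cs" using S_img by blast
    show "\<exists>!cs. length cs = n \<and> set cs \<subseteq> Fq q \<and>
             x = vec (dim_vec x) (\<lambda>j. \<Sum>i<n. cs ! i * (map U [0..<n] ! i) $ j)"
    proof (rule ex1I[of _ cs])
      show "length cs = n \<and> set cs \<subseteq> Fq q \<and>
             x = vec (dim_vec x) (\<lambda>j. \<Sum>i<n. cs ! i * (map U [0..<n] ! i) $ j)"
        using cs dimS[OF x] vecbs by (simp add: Lists_def)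
    next
      fix cs' assume "length cs' = n \<and> set cs' \<subseteq> Fq q \<and>
             x = vec (dim_vec x) (\<lambda>j. \<Sum>i<n. cs' ! i * (map U [0..<n] ! i) $ j)"
      hence "cs' \<in> Lists" "x = vl cs'" using dimS[OF x] vecbs by (auto simp: Lists_def)
      thus "cs' = cs" using inj cs unfolding inj_on_def by metis
    qed
  next
    fix cs :: "'k alg_closure list" assume "length cs = n \<and> set cs \<subseteq> Fq q"
    hence "cs \<in> Lists" by (auto simp: Lists_def)
    hence "vl cs \<in> S" by (rule vl_fix)
    thus "\<exists>x\<in>S. x = vec (dim_vec x) (\<lambda>j. \<Sum>i<n. cs ! i * (map U [0..<n] ! i) $ j)"
      using dimS vecbs by metis
  qed
  have goodL0: "solution_field_good q D L0"
    unfolding solution_field_good_def ext_field_def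
    using gen_field_subfield[of "base_field \<union> C"] baseL0 FL0 hasdim Dr by (simp add: L0_def)
  have minimal: "L0 \<subseteq> L'" if good: "solution_field_good q D L'" for L'
  proof -
    from good have ext: "is_subfield L'" "base_field \<subseteq> L'" and hd: "has_Fq_dim q (frob_fixed q D L') n"
      unfolding solution_field_good_def ext_field_def using Dr by auto
    define S' where "S' = frob_fixed q D L'"
    have S'S: "S' \<subseteq> S" unfolding S'_def FF by blast
    from hd obtain bs where bs:
      "\<forall>x\<in>S'. \<exists>!cs. length cs = n \<and> set cs \<subseteq> Fq q \<and> x = vec (dim_vec x) (\<lambda>j. \<Sum>i<n. cs ! i * (bs ! i) $ j)"
      "\<forall>cs. length cs = n \<and> set cs \<subseteq> Fq q \<longrightarrow> (\<exists>x\<in>S'. x = vec (dim_vec x) (\<lambda>j. \<Sum>i<n. cs ! i * (bs ! i) $ j))"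
      unfolding has_Fq_dim_def S'_def by blast
    define h where "h cs = vec n (\<lambda>j. \<Sum>i<n. cs ! i * (bs ! i) $ j)" for cs :: "'k alg_closure list"
    have hS: "h cs \<in> S'" if "cs \<in> Lists" for cs
    proof -
      from bs(2) that obtain x where x: "x \<in> S'" "x = vec (dim_vec x) (\<lambda>j. \<Sum>i<n. cs ! i * (bs ! i) $ j)"
        unfolding Lists_def by blast
      have "dim_vec x = n" using x(1) S'S dimS by blast
      thus ?thesis using x by (simp add: h_def)
    qed
    have injh: "inj_on h Lists"
    proof
      fix cs cs' assume c: "cs \<in> Lists" "cs' \<in> Lists" "h cs = h cs'"
      have x: "h cs \<in> S'" using hS[OF c(1)] .
      have dx: "dim_vec (h cs) = n" by (simp add: h_def)
      have P1: "length cs = n \<and> set cs \<subseteq> Fq q \<and> h cs = vec (dim_vec (h cs)) (\<lambda>j. \<Sum>i<n. cs ! i * (bs ! i) $ j)"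
        using c(1) dx by (simp add: Lists_def h_def)
      have P2: "length cs' = n \<and> set cs' \<subseteq> Fq q \<and> h cs = vec (dim_vec (h cs)) (\<lambda>j. \<Sum>i<n. cs' ! i * (bs ! i) $ j)"
        using c(2,3) dx by (simp add: Lists_def h_def)
      show "cs = cs'" using bs(1) x P1 P2 by blast
    qed
    have finS': "finite S'" using S'S finS finite_subset by blast
    have "card Lists \<le> card S'" using card_inj_on_le[OF injh _ finS'] hS by blast
    hence "card S \<le> card S'" using cardS by simp
    hence "S' = S" using card_seteq[OF finS S'S] by blast
    hence "\<forall>x\<in>S. \<forall>i<n. x $ i \<in> L'" unfolding S'_def FF by blast
    hence "C \<subseteq> L'" unfolding C_def by blast
    thus ?thesis unfolding L0_def using ext by (intro gen_field_least) auto
  qed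
  have sol: "solution_field q D = L0"
    unfolding solution_field_def
  proof (rule the_equality)
    show "solution_field_good q D L0 \<and> (\<forall>L'. solution_field_good q D L' \<longrightarrow> L0 \<subseteq> L')"
      using goodL0 minimal by blast
  next
    fix L assume "solution_field_good q D L \<and> (\<forall>L'. solution_field_good q D L' \<longrightarrow> L \<subseteq> L')"
    hence "L \<subseteq> L0" "L0 \<subseteq> L" using goodL0 minimal by auto
    thus "L = L0" by blast
  qed
  have split: "splitting_field f = L0"
  proof -
    have sf: "splitting_field f = gen_field (base_field \<union> R)"
      by (simp add: splitting_field_def R_def g_def)
    have RC: "R \<subseteq> C" using R_eq assms(5) unfolding C_def by blast
    have "gen_field (base_field \<union> R) \<subseteq> L0"
      unfolding L0_def using RC by (intro gen_field_mono) blast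
    moreover have "L0 \<subseteq> gen_field (base_field \<union> R)"
    proof -
      have "C \<subseteq> gen_field (base_field \<union> R)"
      proof
        fix z assume "z \<in> C"
        then obtain x i where x: "x \<in> S" "i < n" "z = x $ i" unfolding C_def by blast
        have "z \<in> adjoin (x $ 0)" using assms(10) S_eq x by blast
        moreover have "x $ 0 \<in> R" using R_eq x(1) by blast
        hence "adjoin (x $ 0) \<subseteq> gen_field (base_field \<union> R)"
          unfolding adjoin_def by (intro gen_field_mono) blast
        ultimately show "z \<in> gen_field (base_field \<union> R)" by blast
      qed
      moreover have "base_field \<subseteq> gen_field (base_field \<union> R)"
        using gen_field_incl by blast
      ultimately show ?thesis unfolding L0_def
        by (intro gen_field_least gen_field_subfield) blast
    qed
    ultimately show ?thesis using sf by blast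
  qed
  show ?thesis by (simp add: frob_gal_group_def poly_gal_group_def sol split)
qed

end
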